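(* $\chi_i'(S_{C_4}^1)=2$ and $\chi_i'(S_{C_4}^n)=3$ for every integer $n\ge 2$, where $C_4$ is the cycle on $4$ vertices.
   Context: For a graph $H$ with at least one edge, an injective edge $k$-coloring is a map $c:E(H)\to\{1,\dots,k\}$ such that whenever $e_1=xy$, $e_2=yz$, $e_3=zu$ are edges of $H$ with $x,y,z$ distinct and $u\notin\{y,z\}$ (the case $u=x$ being allowed), we have $c(e_1)\ne c(e_3)$. The injective chromatic index $\chi_i'(H)$ is the least $k$ for which such a coloring exists. For a graph $G$ and positive integer $n$, the generalized Sierpiński graph $S_G^n$ has vertex set $V(G)^n$, and $(u_1,\dots,u_n)$, $(v_1,\dots,v_n)$ are adjacent if and only if there is $d\in\{1,\dots,n\}$ with $u_i=v_i$ for $i<d$, $u_dv_d\in E(G)$, and $u_i=v_d$, $v_i=u_d$ for all $i>d$. *)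

theory Defs
  imports Main
begin

text \<open>A simple graph is given by a vertex set V and a symmetric adjacency relation adj
  (only used on V). Edges are unordered pairs {x,y}.\<close>

definition graph_edges :: "'a set \<Rightarrow> ('a \<Rightarrow> 'a \<Rightarrow> bool) \<Rightarrow> 'a set set" where
  "graph_edges V adj = {{x, y} | x y. x \<in> V \<and> y \<in> V \<and> adj x y}"

definition inj_edge_coloring ::
  "'a set \<Rightarrow> ('a \<Rightarrow> 'a \<Rightarrow> bool) \<Rightarrow> nat \<Rightarrow> ('a set \<Rightarrow> nat) \<Rightarrow> bool" where
  "inj_edge_coloring V adj k c \<longleftrightarrow>
     (\<forall>e \<in> graph_edges V adj. c e \<in> {1..k}) \<and>
     (\<forall>x y z u. x \<in> V \<and> y \<in> V \<and> z \<in> V \<and> u \<in> V \<and>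
        adj x y \<and> adj y z \<and> adj z u \<and>
        x \<noteq> y \<and> y \<noteq> z \<and> x \<noteq> z \<and> u \<noteq> y \<and> u \<noteq> z
        \<longrightarrow> c {x, y} \<noteq> c {z, u})"

definition inj_chromatic_index :: "'a set \<Rightarrow> ('a \<Rightarrow> 'a \<Rightarrow> bool) \<Rightarrow> nat" where
  "inj_chromatic_index V adj = (LEAST k. \<exists>c. inj_edge_coloring V adj k c)"

definition sierp_verts :: "'a set \<Rightarrow> nat \<Rightarrow> 'a list set" where
  "sierp_verts V n = {w. length w = n \<and> set w \<subseteq> V}"

definition sierp_adj :: "('a \<Rightarrow> 'a \<Rightarrow> bool) \<Rightarrow> nat \<Rightarrow> 'a list \<Rightarrow> 'a list \<Rightarrow> bool" where
  "sierp_adj adj n u v \<longleftrightarrow> length u = n \<and> length v = n \<and>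
     (\<exists>d < n. (\<forall>i < d. u ! i = v ! i) \<and> adj (u ! d) (v ! d) \<and>
        (\<forall>i. d < i \<and> i < n \<longrightarrow> u ! i = v ! d \<and> v ! i = u ! d))"

definition C4_verts :: "nat set" where
  "C4_verts = {0..<4}"

definition C4_adj :: "nat \<Rightarrow> nat \<Rightarrow> bool" where
  "C4_adj a b \<longleftrightarrow> a < 4 \<and> b < 4 \<and> (b = (a + 1) mod 4 \<or> a = (b + 1) mod 4)"

end

theory Submission imports Defs begin

lemma sierp_adj_len: "sierp_adj adj n u v \<Longrightarrow> length u = n \<and> length v = n"
  by (simp add: sierp_adj_def)

lemma sierp_adj_0[simp]: "\<not> sierp_adj adj 0 u v"
  by (simp add: sierp_adj_def)

lemma rep_eq_iff: "length u = n \<Longrightarrow> (u = replicate n c) \<longleftrightarrow> (\<forall>i<n. u ! i = c)"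
  by (metis in_set_conv_nth replicate_eqI nth_replicate)

lemma sierp_adj_Cons: "sierp_adj adj (Suc n) (c#u) (c'#v) \<longleftrightarrow>
   (c = c' \<and> sierp_adj adj n u v) \<or> (adj c c' \<and> u = replicate n c' \<and> v = replicate n c)"
proof
  assume H: "sierp_adj adj (Suc n) (c#u) (c'#v)"
  then have L: "length u = n" "length v = n" by (auto simp: sierp_adj_def)
  from H obtain d where d: "d < Suc n" "\<forall>i<d. (c#u) ! i = (c'#v) ! i" "adj ((c#u) ! d) ((c'#v) ! d)"
     "\<forall>i. d < i \<and> i < Suc n \<longrightarrow> (c#u) ! i = (c'#v) ! d \<and> (c'#v) ! i = (c#u) ! d"
    by (auto simp: sierp_adj_def)
  show "(c = c' \<and> sierp_adj adj n u v) \<or> (adj c c' \<and> u = replicate n c' \<and> v = replicate n c)"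
  proof (cases d)
    case 0
    have "\<forall>i<n. u ! i = c'" "\<forall>i<n. v ! i = c"
      using d(4) 0 by (auto dest: spec[of _ "Suc _"])
    then show ?thesis using d(3) 0 L by (simp add: rep_eq_iff)
  next
    case (Suc d')
    have "c = c'" using d(2) Suc by (auto dest: spec[of _ 0])
    moreover have "sierp_adj adj n u v" unfolding sierp_adj_def
    proof (intro conjI exI[of _ d'])
      show "d' < n" using d(1) Suc by simp
      show "\<forall>i<d'. u ! i = v ! i" using d(2) Suc by (auto dest: spec[of _ "Suc _"])
      show "adj (u ! d') (v ! d')" using d(3) Suc by simp
      show "\<forall>i. d' < i \<and> i < n \<longrightarrow> u ! i = v ! d' \<and> v ! i = u ! d'"
        using d(4) Suc by (auto dest: spec[of _ "Suc _"])
    qed (use L in auto)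
    ultimately show ?thesis by simp
  qed
next
  assume "(c = c' \<and> sierp_adj adj n u v) \<or> (adj c c' \<and> u = replicate n c' \<and> v = replicate n c)"
  then show "sierp_adj adj (Suc n) (c#u) (c'#v)"
  proof
    assume A: "c = c' \<and> sierp_adj adj n u v"
    then obtain d where d: "d < n" "\<forall>i<d. u ! i = v ! i" "adj (u ! d) (v ! d)"
     "\<forall>i. d < i \<and> i < n \<longrightarrow> u ! i = v ! d \<and> v ! i = u ! d" and L: "length u = n" "length v = n"
      by (auto simp: sierp_adj_def)
    show ?thesis unfolding sierp_adj_def
    proof (intro conjI exI[of _ "Suc d"])
      show "\<forall>i<Suc d. (c # u) ! i = (c' # v) ! i"
      proof (intro allI impI)
        fix i assume "i < Suc d" then show "(c # u) ! i = (c' # v) ! i"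
        proof (cases i)
          case 0 then show ?thesis using A by simp
        next
          case (Suc j) then have "j < d" using \<open>i < Suc d\<close> by simp
          then show ?thesis using d(2) Suc by simp
        qed
      qed
      show "\<forall>i. Suc d < i \<and> i < Suc n \<longrightarrow> (c # u) ! i = (c' # v) ! Suc d \<and> (c' # v) ! i = (c # u) ! Suc d"
      proof (intro allI impI)
        fix i assume "Suc d < i \<and> i < Suc n" then show "(c # u) ! i = (c' # v) ! Suc d \<and> (c' # v) ! i = (c # u) ! Suc d"
        proof (cases i)
          case 0 then show ?thesis using \<open>Suc d < i \<and> i < Suc n\<close> by simp
        next
          case (Suc j) then have "d < j \<and> j < n" using \<open>Suc d < i \<and> i < Suc n\<close> by simp
          then show ?thesis using d(4) Suc by simp
        qed
      qed
    qed (use L d in auto)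
  next
    assume A: "adj c c' \<and> u = replicate n c' \<and> v = replicate n c"
    show ?thesis unfolding sierp_adj_def
    proof (intro conjI exI[of _ 0])
      show "\<forall>i. 0 < i \<and> i < Suc n \<longrightarrow> (c # u) ! i = (c' # v) ! 0 \<and> (c' # v) ! i = (c # u) ! 0"
      proof (intro allI impI)
        fix i assume "0 < i \<and> i < Suc n" then show "(c # u) ! i = (c' # v) ! 0 \<and> (c' # v) ! i = (c # u) ! 0"
          using A by (cases i) auto
      qed
    qed (use A in auto)
  qed
qed

lemma sierp_adj_Nil1[simp]: "\<not> sierp_adj adj n [] v"
  by (cases n) (auto simp: sierp_adj_def)


lemma sierp_adj_Nil2[simp]: "\<not> sierp_adj adj n u []"
  by (cases n) (auto simp: sierp_adj_def)

lemma C4E: "C4_adj a b \<Longrightarrow> (a = 0 \<and> b = 1) \<or> (a = 1 \<and> b = 0) \<or> (a = 1 \<and> b = 2) \<or> (a = 2 \<and> b = 1)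
   \<or> (a = 2 \<and> b = 3) \<or> (a = 3 \<and> b = 2) \<or> (a = 3 \<and> b = 0) \<or> (a = 0 \<and> b = 3)"
proof -
  assume H: "C4_adj a b"
  then have "a < 4" "b < 4" by (auto simp: C4_adj_def)
  then have "a = 0 \<or> a = 1 \<or> a = 2 \<or> a = 3" "b = 0 \<or> b = 1 \<or> b = 2 \<or> b = 3" by auto
  then show ?thesis using H by (elim disjE; simp add: C4_adj_def)
qed
lemma C4I: "(a = 0 \<and> b = 1) \<or> (a = 1 \<and> b = 0) \<or> (a = 1 \<and> b = 2) \<or> (a = 2 \<and> b = 1)
   \<or> (a = 2 \<and> b = 3) \<or> (a = 3 \<and> b = 2) \<or> (a = 3 \<and> b = 0) \<or> (a = 0 \<and> b = 3) \<Longrightarrow> C4_adj a b"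
  by (auto simp: C4_adj_def)

lemma C4_irrefl[simp]: "\<not> C4_adj a a" using C4E[of a a] by auto
lemma C4_irrefl_ne: "C4_adj a b \<Longrightarrow> a \<noteq> b" by auto

lemma C4_sym: "C4_adj a b \<Longrightarrow> C4_adj b a" by (rule C4I, drule C4E) auto

lemma sierp_sym: "sierp_adj C4_adj n u v \<Longrightarrow> sierp_adj C4_adj n v u"
proof (induction n arbitrary: u v)
  case 0 then show ?case by simp
next
  case (Suc n)
  obtain c u' where u: "u = c#u'" using Suc.prems by (cases u) auto
  obtain d v' where v: "v = d#v'" using Suc.prems by (cases v) auto
  have "(c = d \<and> sierp_adj C4_adj n u' v') \<or> (C4_adj c d \<and> u' = replicate n d \<and> v' = replicate n c)"
    using Suc.prems unfolding u v sierp_adj_Cons .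
  then have "(d = c \<and> sierp_adj C4_adj n v' u') \<or> (C4_adj d c \<and> v' = replicate n c \<and> u' = replicate n d)"
    using Suc.IH C4_sym by blast
  then show ?case unfolding u v sierp_adj_Cons .
qed

lemma sierp_adj_Suc_cases:
  assumes "sierp_adj adj (Suc n) u v"
  obtains c u' d v' where "u = c#u'" "v = d#v'"
    "(c = d \<and> sierp_adj adj n u' v') \<or> (adj c d \<and> u' = replicate n d \<and> v' = replicate n c)"
proof -
  obtain c u' where u: "u = c#u'" using assms by (cases u) auto
  obtain d v' where v: "v = d#v'" using assms by (cases v) auto
  show thesis using assms unfolding u v sierp_adj_Cons by (rule that[OF u v])
qed

lemma adj_rep:
  "sierp_adj C4_adj n (replicate n a) v \<Longrightarrow> 0 < n \<and> (\<exists>s. C4_adj a s \<and> v = replicate (n - 1) a @ [s])"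
proof (induction n arbitrary: v)
  case 0 then show ?case by simp
next
  case (Suc n)
  obtain d v' where v: "v = d#v'" and H: "(a = d \<and> sierp_adj C4_adj n (replicate n a) v') \<or>
      (C4_adj a d \<and> replicate n a = replicate n d \<and> v' = replicate n a)"
    using Suc.prems by (auto elim: sierp_adj_Suc_cases)
  show ?case
  proof (cases "a = d \<and> sierp_adj C4_adj n (replicate n a) v'")
    case True
    then obtain s where "C4_adj a s" "v' = replicate (n - 1) a @ [s]" "0 < n" using Suc.IH by blast
    then show ?thesis using v True by (cases n) auto
  next
    case False
    then have "C4_adj a d" "replicate n a = replicate n d" "v' = replicate n a" using H by auto
    then have "n = 0" by (cases n) auto
    then show ?thesis using v \<open>C4_adj a d\<close> \<open>v' = replicate n a\<close> by auto
  qed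
qed

lemma adj_rep_s:
  "sierp_adj C4_adj (Suc m) (replicate m a @ [s]) v \<Longrightarrow> C4_adj a s \<Longrightarrow>
    (\<exists>s'. C4_adj s s' \<and> v = replicate m a @ [s']) \<or> (0 < m \<and> v = replicate (m - 1) a @ [s, a])"
proof (induction m arbitrary: v)
  case 0
  then obtain d where "v = [d]" "C4_adj s d" by (auto elim!: sierp_adj_Suc_cases)
  then show ?case by auto
next
  case (Suc m)
  obtain d v' where v: "v = d#v'" and H: "(a = d \<and> sierp_adj C4_adj (Suc m) (replicate m a @ [s]) v') \<or>
      (C4_adj a d \<and> replicate m a @ [s] = replicate (Suc m) d \<and> v' = replicate (Suc m) a)"
    using Suc.prems(1) by (auto elim: sierp_adj_Suc_cases)
  show ?case
  proof (cases "a = d \<and> sierp_adj C4_adj (Suc m) (replicate m a @ [s]) v'")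
    case True
    then have "(\<exists>s'. C4_adj s s' \<and> v' = replicate m a @ [s']) \<or> (0 < m \<and> v' = replicate (m - 1) a @ [s, a])"
      using Suc.IH Suc.prems(2) by blast
    then show ?thesis using v True by (cases m) auto
  next
    case False
    then have A: "C4_adj a d" "replicate m a @ [s] = replicate (Suc m) d" "v' = replicate (Suc m) a" using H by auto
    then have "m = 0"
      by (cases m) auto
    then show ?thesis using v A by auto
  qed
qed


definition oddl :: "nat \<Rightarrow> nat \<Rightarrow> nat" where
  "oddl a b = (if odd a then a else b)"

definition ocol :: "nat \<Rightarrow> nat \<Rightarrow> nat" where
  "ocol a b = (if oddl a b = 1 then 1 else 2)"

fun col :: "nat option \<Rightarrow> nat list \<Rightarrow> nat list \<Rightarrow> nat" where
  "col p (c#u) (d#v) = (if c = d then col (Some c) u v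
     else if 2 \<le> length u then 3 else if length u = 1 then ocol c d
     else if p = Some (oddl c d) then 3 else ocol c d)"
| "col p _ _ = 0"

lemma ocol_ne3[simp]: "ocol a b \<noteq> 3" "ocol a b \<in> {1,2}" by (auto simp: ocol_def)

lemma col_rep: "col p (replicate m a @ u) (replicate m a @ v) = col (if m = 0 then p else Some a) u v"
  by (induction m arbitrary: p) auto

lemma oddl_sym: "C4_adj a b \<Longrightarrow> oddl a b = oddl b a"
  by (drule C4E) (auto simp: oddl_def)

lemma col_sym: "sierp_adj C4_adj n u v \<Longrightarrow> col p u v = col p v u"
proof (induction n arbitrary: p u v)
  case 0 then show ?case by simp
next
  case (Suc n)
  from Suc.prems obtain c u' d v' where "u = c#u'" "v = d#v'"
    "(c = d \<and> sierp_adj C4_adj n u' v') \<or> (C4_adj c d \<and> u' = replicate n d \<and> v' = replicate n c)"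
    by (auto elim: sierp_adj_Suc_cases)
  then consider (A) "u = c#u'" "v = d#v'" "c = d" "sierp_adj C4_adj n u' v'"
    | (B) "u = c#u'" "v = d#v'" "C4_adj c d" "u' = replicate n d" "v' = replicate n c" by blast
  then show ?case
  proof cases
    case A then show ?thesis using Suc.IH by simp
  next
    case B
    have "ocol c d = ocol d c" using oddl_sym[OF B(3)] by (simp add: ocol_def)
    then show ?thesis using B by (simp add: oddl_sym[OF B(3)])
  qed
qed

lemma col_range: "sierp_adj C4_adj n u v \<Longrightarrow> col p u v \<in> {1,2,3}"
proof (induction n arbitrary: p u v)
  case 0 then show ?case by simp
next
  case (Suc n)
  from Suc.prems obtain c u' d v' where "u = c#u'" "v = d#v'"
    "(c = d \<and> sierp_adj C4_adj n u' v') \<or> (C4_adj c d \<and> u' = replicate n d \<and> v' = replicate n c)"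
    by (auto elim: sierp_adj_Suc_cases)
  then consider (A) "u = c#u'" "v = d#v'" "c = d" "sierp_adj C4_adj n u' v'"
    | (B) "u = c#u'" "v = d#v'" "C4_adj c d" "u' = replicate n d" "v' = replicate n c" by blast
  then show ?case
  proof cases
    case A then show ?thesis using Suc.IH by simp
  next
    case B
    then show ?thesis using ocol_ne3(2)[of c d] by auto
  qed
qed

lemma col_range1: "sierp_adj C4_adj 1 u v \<Longrightarrow> col None u v \<in> {1,2}"
proof -
  assume "sierp_adj C4_adj 1 u v"
  then obtain c d where "u = [c]" "v = [d]" "C4_adj c d"
    by (auto elim!: sierp_adj_Suc_cases[where n=0, simplified])
  then show ?thesis using ocol_ne3(2)[of c d] by auto
qed

lemma base1F: "C4_adj a b \<Longrightarrow> C4_adj b c \<Longrightarrow> C4_adj c d \<Longrightarrow> a \<noteq> c \<Longrightarrow> d \<noteq> b \<Longrightarrow>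
   (if p = Some (oddl a b) then 3 else ocol a b) \<noteq> (if p = Some (oddl c d) then 3 else ocol c d)"
  by (drule C4E, drule C4E, drule C4E) (elim disjE conjE; simp add: oddl_def ocol_def)

lemma F1: "C4_adj a b \<Longrightarrow> C4_adj a s \<Longrightarrow> C4_adj b s \<Longrightarrow> False"
  by (drule C4E, drule C4E, drule C4E) (elim disjE conjE; simp)

lemma F2: "C4_adj a b \<Longrightarrow> C4_adj a s \<Longrightarrow> C4_adj s s' \<Longrightarrow> s' \<noteq> a \<Longrightarrow>
  ocol a b \<noteq> (if b = oddl s s' then 3 else ocol s s')"
  by (drule C4E, drule C4E, drule C4E) (elim disjE conjE; simp add: oddl_def ocol_def)

lemma F3: "C4_adj a s \<Longrightarrow> C4_adj s s' \<Longrightarrow> s' \<noteq> a \<Longrightarrow> a \<noteq> oddl s s'"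
  by (drule C4E, drule C4E) (elim disjE conjE; simp add: oddl_def)

lemma F4: "C4_adj a b \<Longrightarrow> C4_adj b s \<Longrightarrow> C4_adj a s' \<Longrightarrow>
  (if a = oddl s b then 3 else ocol s b) \<noteq> (if b = oddl a s' then 3 else ocol a s')"
  by (drule C4E, drule C4E, drule C4E) (elim disjE conjE; simp add: oddl_def ocol_def)

lemma F5: "C4_adj a b \<Longrightarrow> C4_adj b s \<Longrightarrow> C4_adj a s' \<Longrightarrow>
  (if b = oddl s b then 3 else ocol s b) \<noteq> (if a = oddl a s' then 3 else ocol a s')"
  by (drule C4E, drule C4E, drule C4E) (elim disjE conjE; simp add: oddl_def ocol_def)

lemma base1: "C4_adj a b \<Longrightarrow> C4_adj b c \<Longrightarrow> C4_adj c d \<Longrightarrow> a \<noteq> c \<Longrightarrow> d \<noteq> b \<Longrightarrow>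
   col p [a] [b] \<noteq> col p [c] [d]"
  using base1F[of a b c d p] by (simp add: C4_irrefl_ne)

lemma rep_snoc2: "replicate k a @ a # w = a # replicate k a @ w"
  by (induction k) auto

lemma rep_Suc_snoc: "replicate (Suc m) a = replicate m a @ [a]"
  by (simp add: replicate_append_same)

lemma adj_Cons_left: "sierp_adj adj (Suc n) (c#u) v \<Longrightarrow>
  \<exists>d v'. v = d#v' \<and> ((c = d \<and> sierp_adj adj n u v') \<or> (adj c d \<and> u = replicate n d \<and> v' = replicate n c))"
  by (cases v) (simp_all add: sierp_adj_Cons)

lemma adj_Cons_leftE:
  assumes "sierp_adj adj (Suc n) (c#u) v"
  obtains d v' where "v = d#v'" "(c = d \<and> sierp_adj adj n u v') \<or> (adj c d \<and> u = replicate n d \<and> v' = replicate n c)"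
proof (cases v)
  case Nil then show thesis using assms by simp
next
  case (Cons d v')
  show thesis using assms unfolding Cons sierp_adj_Cons by (rule that[OF Cons])
qed

lemma rep_Suc_eq: "replicate (Suc m) a = replicate (Suc m) b \<Longrightarrow> a = b"
  by simp

lemma caseA:
  assumes ab: "C4_adj a b" and n: "n = Suc m"
    and yz: "sierp_adj C4_adj (Suc n) (b # replicate n a) z"
    and zu: "sierp_adj C4_adj (Suc n) z u"
    and zx: "z \<noteq> a # replicate n b" and uy: "u \<noteq> b # replicate n a" and uz: "u \<noteq> z"
  shows "col p (a # replicate n b) (b # replicate n a) \<noteq> col p z u"
proof -
  obtain z0 z' where z: "z = z0 # z'" and zH: "(b = z0 \<and> sierp_adj C4_adj n (replicate n a) z') \<or>
     (C4_adj b z0 \<and> replicate n a = replicate n z0 \<and> z' = replicate n b)"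
    by (rule adj_Cons_leftE[OF yz])
  have "\<not> (C4_adj b z0 \<and> replicate n a = replicate n z0 \<and> z' = replicate n b)"
  proof
    assume H: "C4_adj b z0 \<and> replicate n a = replicate n z0 \<and> z' = replicate n b"
    then have "replicate (Suc m) a = replicate (Suc m) z0" using n by simp
    then have "a = z0" by simp
    then show False using zx z H by simp
  qed
  then have zb: "z0 = b" and zz: "sierp_adj C4_adj n (replicate n a) z'" using zH by auto
  have "\<exists>s. C4_adj a s \<and> z' = replicate m a @ [s]" using adj_rep[OF zz] n by simp
  then obtain s where as: "C4_adj a s" and z': "z' = replicate m a @ [s]" by blast
  have zu': "sierp_adj C4_adj (Suc n) (b # z') u" using zu z zb by simp
  obtain u0 u' where u: "u = u0 # u'" and uH: "(b = u0 \<and> sierp_adj C4_adj n z' u') \<or>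
     (C4_adj b u0 \<and> z' = replicate n u0 \<and> u' = replicate n b)"
    by (rule adj_Cons_leftE[OF zu'])
  have "\<not> (C4_adj b u0 \<and> z' = replicate n u0 \<and> u' = replicate n b)"
  proof
    assume H: "C4_adj b u0 \<and> z' = replicate n u0 \<and> u' = replicate n b"
    then have "z' = replicate (Suc m) u0" using n by simp
    then have E: "replicate m a @ [s] = replicate m u0 @ [u0]" using z' by (metis rep_Suc_snoc)
    then have "s = u0" by simp
    show False
    proof (cases m)
      case 0 then show False using F1[OF ab as] H \<open>s = u0\<close> by auto
    next
      case (Suc k) then have "a = u0" using E by simp
      then show False using as \<open>s = u0\<close> by simp
    qed
  qed
  then have ub: "u0 = b" and "sierp_adj C4_adj (Suc m) (replicate m a @ [s]) u'" using uH n z' by auto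
  then have "(\<exists>s'. C4_adj s s' \<and> u' = replicate m a @ [s']) \<or> (0 < m \<and> u' = replicate (m - 1) a @ [s, a])"
    using adj_rep_s as by blast
  then show ?thesis
  proof
    assume "\<exists>s'. C4_adj s s' \<and> u' = replicate m a @ [s']"
    then obtain s' where ss: "C4_adj s s'" and u': "u' = replicate m a @ [s']" by blast
    have "s' \<noteq> a"
    proof
      assume "s' = a"
      then have "u' = replicate (Suc m) a" using u' by (metis rep_Suc_snoc)
      then show False using uy u ub n by simp
    qed
    have "s \<noteq> s'" using ss by auto
    have L: "col p z u = (if (if m = 0 then Some b else Some a) = Some (oddl s s') then 3 else ocol s s')"
      using z zb z' u ub u' \<open>s \<noteq> s'\<close> by (simp add: col_rep)
    show ?thesis
    proof (cases m)
      case 0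
      then show ?thesis using L n C4_irrefl_ne[OF ab] F2[OF ab as ss \<open>s' \<noteq> a\<close>] by simp
    next
      case (Suc k)
      then show ?thesis using L n C4_irrefl_ne[OF ab] F3[OF as ss \<open>s' \<noteq> a\<close>] by simp
    qed
  next
    assume A: "0 < m \<and> u' = replicate (m - 1) a @ [s, a]"
    then obtain k where k: "m = Suc k" by (cases m) auto
    have "z = b # replicate k a @ [a, s]" using z zb z' k by (simp add: rep_snoc2)
    moreover have "u = b # replicate k a @ [s, a]" using u ub A k by simp
    moreover have "a \<noteq> s" using as by auto
    ultimately have "col p z u = ocol a s" by (simp add: col_rep)
    moreover have "col p (a # replicate n b) (b # replicate n a) = 3" using C4_irrefl_ne[OF ab] n k by simp
    ultimately show ?thesis by simp
  qed
qed

lemma caseB: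
  assumes ab: "C4_adj a b" and n: "n = Suc m"
    and xy: "sierp_adj C4_adj (Suc n) x (a # replicate n b)"
    and zu: "sierp_adj C4_adj (Suc n) (b # replicate n a) u"
    and xz: "x \<noteq> b # replicate n a" and uy: "u \<noteq> a # replicate n b"
  shows "col p x (a # replicate n b) \<noteq> col p (b # replicate n a) u"
proof -
  obtain x0 x' where x: "x = x0 # x'" and xH: "(a = x0 \<and> sierp_adj C4_adj n (replicate n b) x') \<or>
     (C4_adj a x0 \<and> replicate n b = replicate n x0 \<and> x' = replicate n a)"
    by (rule adj_Cons_leftE[OF sierp_sym[OF xy]])
  have "\<not> (C4_adj a x0 \<and> replicate n b = replicate n x0 \<and> x' = replicate n a)"
  proof
    assume H: "C4_adj a x0 \<and> replicate n b = replicate n x0 \<and> x' = replicate n a"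
    then have "replicate (Suc m) b = replicate (Suc m) x0" using n by simp
    then have "b = x0" by simp
    then show False using xz x H by simp
  qed
  then have xa: "x0 = a" and xx: "sierp_adj C4_adj n (replicate n b) x'" using xH by auto
  have "\<exists>s. C4_adj b s \<and> x' = replicate m b @ [s]" using adj_rep[OF xx] n by simp
  then obtain s where bs: "C4_adj b s" and x': "x' = replicate m b @ [s]" by blast
  obtain u0 u' where u: "u = u0 # u'" and uH: "(b = u0 \<and> sierp_adj C4_adj n (replicate n a) u') \<or>
     (C4_adj b u0 \<and> replicate n a = replicate n u0 \<and> u' = replicate n b)"
    by (rule adj_Cons_leftE[OF zu])
  have "\<not> (C4_adj b u0 \<and> replicate n a = replicate n u0 \<and> u' = replicate n b)"
  proof
    assume H: "C4_adj b u0 \<and> replicate n a = replicate n u0 \<and> u' = replicate n b"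
    then have "replicate (Suc m) a = replicate (Suc m) u0" using n by simp
    then have "a = u0" by simp
    then show False using uy u H by simp
  qed
  then have ub: "u0 = b" and uu: "sierp_adj C4_adj n (replicate n a) u'" using uH by auto
  have "\<exists>s'. C4_adj a s' \<and> u' = replicate m a @ [s']" using adj_rep[OF uu] n by simp
  then obtain s' where as': "C4_adj a s'" and u': "u' = replicate m a @ [s']" by blast
  have "s \<noteq> b" "a \<noteq> s'" using bs as' by auto
  have L1: "col p x (a # replicate n b) = (if (if m = 0 then Some a else Some b) = Some (oddl s b) then 3 else ocol s b)"
    using x xa x' n \<open>s \<noteq> b\<close> by (simp add: col_rep rep_Suc_snoc del: replicate_Suc)
  have L2: "col p (b # replicate n a) u = (if (if m = 0 then Some b else Some a) = Some (oddl a s') then 3 else ocol a s')"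
    using u ub u' n \<open>a \<noteq> s'\<close> by (simp add: col_rep rep_Suc_snoc del: replicate_Suc)
  show ?thesis
    using L1 L2 F4[OF ab bs as'] F5[OF ab bs as'] by (cases m) auto
qed


lemma good:
  "sierp_adj C4_adj n x y \<Longrightarrow> sierp_adj C4_adj n y z \<Longrightarrow> sierp_adj C4_adj n z u \<Longrightarrow>
   x \<noteq> y \<Longrightarrow> y \<noteq> z \<Longrightarrow> x \<noteq> z \<Longrightarrow> u \<noteq> y \<Longrightarrow> u \<noteq> z \<Longrightarrow> col p x y \<noteq> col p z u"
proof (induction n arbitrary: p x y z u)
  case 0 then show ?case by simp
next
  case (Suc n)
  obtain x0 x' y0 y' where x: "x = x0#x'" and y: "y = y0#y'" and xyH:
    "(x0 = y0 \<and> sierp_adj C4_adj n x' y') \<or> (C4_adj x0 y0 \<and> x' = replicate n y0 \<and> y' = replicate n x0)"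
    using Suc.prems(1) by (auto elim: sierp_adj_Suc_cases)
  obtain z0 z' where z: "z = z0#z'" and yzH:
    "(y0 = z0 \<and> sierp_adj C4_adj n y' z') \<or> (C4_adj y0 z0 \<and> y' = replicate n z0 \<and> z' = replicate n y0)"
    using Suc.prems(2) y by (auto elim: sierp_adj_Suc_cases)
  obtain u0 u' where u: "u = u0#u'" and zuH:
    "(z0 = u0 \<and> sierp_adj C4_adj n z' u') \<or> (C4_adj z0 u0 \<and> z' = replicate n u0 \<and> u' = replicate n z0)"
    using Suc.prems(3) z by (auto elim: sierp_adj_Suc_cases)
  show ?case
  proof (cases n)
    case 0
    then have "x = [x0]" "y = [y0]" "z = [z0]" "u = [u0]" "C4_adj x0 y0" "C4_adj y0 z0" "C4_adj z0 u0"
      using x y z u xyH yzH zuH Suc.prems(1-3) by (auto dest: sierp_adj_len)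
    then have B: "x = [x0]" "y = [y0]" "z = [z0]" "u = [u0]" "C4_adj x0 y0" "C4_adj y0 z0" "C4_adj z0 u0" .
    have "x0 \<noteq> z0" using Suc.prems(6) B by simp
    moreover have "u0 \<noteq> y0" using Suc.prems(7) B by simp
    ultimately have "col p [x0] [y0] \<noteq> col p [z0] [u0]" using base1[OF B(5) B(6) B(7)] by simp
    then show ?thesis using B by simp
  next
    case (Suc m)
    show ?thesis
    proof (cases "x0 = y0 \<and> y0 = z0 \<and> z0 = u0")
      case True
      then have "sierp_adj C4_adj n x' y'" "sierp_adj C4_adj n y' z'" "sierp_adj C4_adj n z' u'"
        using xyH yzH zuH by auto
      moreover have "x' \<noteq> y'" "y' \<noteq> z'" "x' \<noteq> z'" "u' \<noteq> y'" "u' \<noteq> z'"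
        using Suc.prems(4-8) x y z u True by auto
      ultimately have "col (Some x0) x' y' \<noteq> col (Some x0) z' u'" using Suc.IH by blast
      then show ?thesis using x y z u True by simp
    next
      case False
      then consider "x0 \<noteq> y0" | "x0 = y0" "y0 \<noteq> z0" | "y0 = z0" "z0 \<noteq> u0" by blast
      then show ?thesis
      proof cases
        case 1
        then have A: "C4_adj x0 y0" "x = x0 # replicate n y0" "y = y0 # replicate n x0" using xyH x y by auto
        show ?thesis using caseA[OF A(1) Suc, of z u p] A Suc.prems by simp
      next
        case 2
        then have A: "C4_adj y0 z0" "y = y0 # replicate n z0" "z = z0 # replicate n y0" using yzH y z by auto
        show ?thesis using caseB[OF A(1) Suc, of x u p] A Suc.prems by simp
      next
        case 3
        then have A: "C4_adj z0 u0" "z = z0 # replicate n u0" "u = u0 # replicate n z0" using zuH z u by auto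
        have "col p (u0 # replicate n z0) (z0 # replicate n u0) \<noteq> col p y x"
        proof (rule caseA[OF C4_sym[OF A(1)] Suc])
          show "sierp_adj C4_adj (Suc n) (z0 # replicate n u0) y"
            using sierp_sym[OF Suc.prems(2)] A by simp
          show "sierp_adj C4_adj (Suc n) y x" using sierp_sym[OF Suc.prems(1)] .
          show "y \<noteq> u0 # replicate n z0" using Suc.prems(7) A by simp
          show "x \<noteq> z0 # replicate n u0" using Suc.prems(6) A by simp
          show "x \<noteq> y" using Suc.prems(4) .
        qed
        then have "col p u z \<noteq> col p y x" using A by simp
        then show ?thesis using col_sym[OF Suc.prems(1), of p] col_sym[OF Suc.prems(3), of p] by simp
      qed
    qed
  qed
qed


definition cE :: "nat list set \<Rightarrow> nat" where
  "cE e = (let q = SOME q. e = {fst q, snd q} in col None (fst q) (snd q))"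

lemma cE_eq: "sierp_adj C4_adj n x y \<Longrightarrow> cE {x,y} = col None x y"
proof -
  assume H: "sierp_adj C4_adj n x y"
  let ?q = "SOME q. {x,y} = {fst q, snd q}"
  have "{x,y} = {fst ?q, snd ?q}" by (rule someI[of _ "(x,y)"]) simp
  then have D: "(x = fst ?q \<and> y = snd ?q) \<or> (x = snd ?q \<and> y = fst ?q)" by (simp add: doubleton_eq_iff)
  have E: "cE {x,y} = col None (fst ?q) (snd ?q)" unfolding cE_def Let_def by (rule refl)
  from D show ?thesis
  proof
    assume "x = fst ?q \<and> y = snd ?q" then show ?thesis using E by simp
  next
    assume "x = snd ?q \<and> y = fst ?q" then show ?thesis using E col_sym[OF H, of None] by simp
  qed
qed

lemma upper:
  assumes "1 \<le> n"
  shows "inj_edge_coloring (sierp_verts C4_verts n) (sierp_adj C4_adj n) (if n = 1 then 2 else 3) cE"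
  unfolding inj_edge_coloring_def
proof (intro conjI ballI allI impI)
  fix e assume "e \<in> graph_edges (sierp_verts C4_verts n) (sierp_adj C4_adj n)"
  then obtain x y where e: "e = {x,y}" "sierp_adj C4_adj n x y" by (auto simp: graph_edges_def)
  then have "cE e = col None x y" using cE_eq by simp
  moreover have "col None x y \<in> {1,2,3}" using col_range[OF e(2)] by simp
  moreover have "n = 1 \<Longrightarrow> col None x y \<in> {1,2}" using col_range1 e(2) by simp
  ultimately show "cE e \<in> {1..(if n = 1 then 2 else 3)}" by auto
next
  fix x y z u
  assume H: "x \<in> sierp_verts C4_verts n \<and> y \<in> sierp_verts C4_verts n \<and> z \<in> sierp_verts C4_verts n \<and>
       u \<in> sierp_verts C4_verts n \<and> sierp_adj C4_adj n x y \<and> sierp_adj C4_adj n y z \<and>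
       sierp_adj C4_adj n z u \<and> x \<noteq> y \<and> y \<noteq> z \<and> x \<noteq> z \<and> u \<noteq> y \<and> u \<noteq> z"
  from H have h: "sierp_adj C4_adj n x y" "sierp_adj C4_adj n y z" "sierp_adj C4_adj n z u"
    "x \<noteq> y" "y \<noteq> z" "x \<noteq> z" "u \<noteq> y" "u \<noteq> z" by blast+
  have "col None x y \<noteq> col None z u" by (rule good[OF h])
  moreover have "cE {x, y} = col None x y" "cE {z, u} = col None z u"
    using cE_eq[OF h(1)] cE_eq[OF h(3)] by blast+
  ultimately show "cE {x, y} \<noteq> cE {z, u}" by simp
qed

lemma adj_prefix: "sierp_adj adj m u v \<Longrightarrow> sierp_adj adj (length P + m) (P @ u) (P @ v)"
  by (induction P) (auto simp: sierp_adj_Cons)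

lemma adj2: "sierp_adj C4_adj 2 [a,b] [c,d] \<longleftrightarrow> (a = c \<and> C4_adj b d) \<or> (C4_adj a c \<and> b = c \<and> d = a)"
  by (simp add: numeral_2_eq_2 sierp_adj_Cons)

lemma adj1: "sierp_adj C4_adj 1 [a] [b] \<longleftrightarrow> C4_adj a b"
  by (simp add: sierp_adj_Cons)

lemma edge_in: "x \<in> V \<Longrightarrow> y \<in> V \<Longrightarrow> adj x y \<Longrightarrow> {x,y} \<in> graph_edges V adj"
  unfolding graph_edges_def by blast

lemma lower1:
  assumes "inj_edge_coloring (sierp_verts C4_verts 1) (sierp_adj C4_adj 1) k c"
  shows "2 \<le> k"
proof -
  have V: "[a] \<in> sierp_verts C4_verts 1" if "a < 4" for a
    using that by (simp add: sierp_verts_def C4_verts_def)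
  have a: "sierp_adj C4_adj 1 [0] [1]" "sierp_adj C4_adj 1 [1] [2]" "sierp_adj C4_adj 1 [2] [3]"
    by (simp_all add: sierp_adj_Cons C4_adj_def)
  have V4: "[0] \<in> sierp_verts C4_verts 1" "[1] \<in> sierp_verts C4_verts 1"
     "[2] \<in> sierp_verts C4_verts 1" "[3] \<in> sierp_verts C4_verts 1" by (simp_all add: sierp_verts_def C4_verts_def)
  have C: "\<forall>x y z u. x \<in> sierp_verts C4_verts 1 \<and> y \<in> sierp_verts C4_verts 1 \<and> z \<in> sierp_verts C4_verts 1 \<and> u \<in> sierp_verts C4_verts 1 \<and>
        sierp_adj C4_adj 1 x y \<and> sierp_adj C4_adj 1 y z \<and> sierp_adj C4_adj 1 z u \<and>
        x \<noteq> y \<and> y \<noteq> z \<and> x \<noteq> z \<and> u \<noteq> y \<and> u \<noteq> z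
        \<longrightarrow> c {x, y} \<noteq> c {z, u}"
   and R: "\<forall>e \<in> graph_edges (sierp_verts C4_verts 1) (sierp_adj C4_adj 1). c e \<in> {1..k}"
    using assms unfolding inj_edge_coloring_def by blast+
  have "[0::nat] \<noteq> [1]" "[1::nat] \<noteq> [2]" "[0::nat] \<noteq> [2]" "[3::nat] \<noteq> [1]" "[3::nat] \<noteq> [2]" by simp_all
  then have "c {[0],[1]} \<noteq> c {[2],[3]}"
    using C[rule_format, of "[0]" "[1]" "[2]" "[3]"] V4 a by blast
  moreover have "c {[0],[1]} \<in> {1..k}" "c {[2],[3]} \<in> {1..k}"
    using R edge_in[of "[0]" "sierp_verts C4_verts 1" "[1]" "sierp_adj C4_adj 1", OF V4(1) V4(2) a(1)]
      edge_in[of "[2]" "sierp_verts C4_verts 1" "[3]" "sierp_adj C4_adj 1", OF V4(3) V4(4) a(3)] by blast+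
  ultimately show ?thesis by auto
qed


lemma conf:
  assumes "inj_edge_coloring V adj k c" "x \<in> V" "y \<in> V" "z \<in> V" "u \<in> V"
    "adj x y" "adj y z" "adj z u" "x \<noteq> y" "y \<noteq> z" "x \<noteq> z" "u \<noteq> y" "u \<noteq> z"
  shows "c {x,y} \<noteq> c {z,u}"
proof -
  from assms(1) have H: "\<forall>x y z u. x \<in> V \<and> y \<in> V \<and> z \<in> V \<and> u \<in> V \<and>
        adj x y \<and> adj y z \<and> adj z u \<and>
        x \<noteq> y \<and> y \<noteq> z \<and> x \<noteq> z \<and> u \<noteq> y \<and> u \<noteq> z
        \<longrightarrow> c {x, y} \<noteq> c {z, u}" unfolding inj_edge_coloring_def by (rule conjunct2)
  show ?thesis using H[rule_format, of x y z u] assms(2-) by blast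
qed

lemma rng:
  assumes "inj_edge_coloring V adj k c" "x \<in> V" "y \<in> V" "adj x y"
  shows "c {x,y} \<in> {1..k}"
proof -
  from assms(1) have H: "\<forall>e \<in> graph_edges V adj. c e \<in> {1..k}"
    unfolding inj_edge_coloring_def by (rule conjunct1)
  show ?thesis using H edge_in[of x V y adj, OF assms(2-4)] by blast
qed

lemma lower2:
  assumes n: "2 \<le> n" and col: "inj_edge_coloring (sierp_verts C4_verts n) (sierp_adj C4_adj n) k c"
  shows "3 \<le> k"
proof -
  define P where "P = replicate (n - 2) (0::nat)"
  have lenP: "length P + 2 = n" using n by (simp add: P_def)
  have V: "P @ [a, b] \<in> sierp_verts C4_verts n" if "a < 4" "b < 4" for a b
    using that lenP by (auto simp: sierp_verts_def C4_verts_def P_def)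
  have A: "sierp_adj C4_adj n (P @ [a,b]) (P @ [c,d])" if "sierp_adj C4_adj 2 [a,b] [c,d]" for a b c d
    using adj_prefix[OF that, of P] lenP by simp
  have v: "P @ [0,0] \<in> sierp_verts C4_verts n" "P @ [0,1] \<in> sierp_verts C4_verts n"
    "P @ [0,2] \<in> sierp_verts C4_verts n" "P @ [0,3] \<in> sierp_verts C4_verts n"
    "P @ [1,0] \<in> sierp_verts C4_verts n" "P @ [1,1] \<in> sierp_verts C4_verts n"
    "P @ [1,2] \<in> sierp_verts C4_verts n" "P @ [1,3] \<in> sierp_verts C4_verts n"
    by (simp_all add: V)
  have a: "sierp_adj C4_adj n (P @ [1,2]) (P @ [1,1])" "sierp_adj C4_adj n (P @ [1,1]) (P @ [1,0])"
    "sierp_adj C4_adj n (P @ [1,0]) (P @ [0,1])" "sierp_adj C4_adj n (P @ [1,0]) (P @ [1,3])"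
    "sierp_adj C4_adj n (P @ [0,2]) (P @ [0,1])" "sierp_adj C4_adj n (P @ [0,1]) (P @ [1,0])"
    "sierp_adj C4_adj n (P @ [0,0]) (P @ [0,3])" "sierp_adj C4_adj n (P @ [0,3]) (P @ [0,2])"
    "sierp_adj C4_adj n (P @ [0,3]) (P @ [0,0])" "sierp_adj C4_adj n (P @ [0,0]) (P @ [0,1])"
    by (rule A; simp add: adj2 C4_adj_def)+
  have c1: "c {P @ [1,2], P @ [1,1]} \<noteq> c {P @ [1,0], P @ [0,1]}"
    by (rule conf[OF col]; (rule v a)?; simp)
  have c2: "c {P @ [1,2], P @ [1,1]} \<noteq> c {P @ [1,0], P @ [1,3]}"
    by (rule conf[OF col]; (rule v a)?; simp)
  have c3: "c {P @ [0,2], P @ [0,1]} \<noteq> c {P @ [1,0], P @ [1,3]}"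
    by (rule conf[OF col]; (rule v a)?; simp)
  have c4: "c {P @ [0,0], P @ [0,3]} \<noteq> c {P @ [0,2], P @ [0,1]}"
    by (rule conf[OF col]; (rule v a)?; simp)
  have c5: "c {P @ [0,3], P @ [0,0]} \<noteq> c {P @ [0,1], P @ [1,0]}"
    by (rule conf[OF col]; (rule v a)?; simp)
  have e1: "{P @ [0,3], P @ [0,0]} = {P @ [0,0], P @ [0,3]}" "{P @ [0,1], P @ [1,0]} = {P @ [1,0], P @ [0,1]}"
    by auto
  have r: "c {P @ [1,2], P @ [1,1]} \<in> {1..k}" "c {P @ [1,0], P @ [0,1]} \<in> {1..k}"
    "c {P @ [1,0], P @ [1,3]} \<in> {1..k}" "c {P @ [0,2], P @ [0,1]} \<in> {1..k}"
    "c {P @ [0,0], P @ [0,3]} \<in> {1..k}"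
    by (rule rng[OF col]; (rule v a))+
  show ?thesis
  proof (rule ccontr)
    assume "\<not> 3 \<le> k"
    then show False using c1 c2 c3 c4 c5 r unfolding e1 by auto
  qed
qed

theorem mainTheorem7:
  shows "inj_chromatic_index (sierp_verts C4_verts 1) (sierp_adj C4_adj 1) = 2 \<and>
         (\<forall>n::nat. n \<ge> 2 \<longrightarrow>
            inj_chromatic_index (sierp_verts C4_verts n) (sierp_adj C4_adj n) = 3)"
proof (intro conjI allI impI)
  show "inj_chromatic_index (sierp_verts C4_verts 1) (sierp_adj C4_adj 1) = 2"
    unfolding inj_chromatic_index_def
  proof (rule Least_equality)
    show "\<exists>c. inj_edge_coloring (sierp_verts C4_verts 1) (sierp_adj C4_adj 1) 2 c"
      using upper[of 1] by auto
    show "\<And>y. \<exists>c. inj_edge_coloring (sierp_verts C4_verts 1) (sierp_adj C4_adj 1) y c \<Longrightarrow> 2 \<le> y"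
      using lower1 by blast
  qed
next
  fix n :: nat assume n: "2 \<le> n"
  show "inj_chromatic_index (sierp_verts C4_verts n) (sierp_adj C4_adj n) = 3"
    unfolding inj_chromatic_index_def
  proof (rule Least_equality)
    have "inj_edge_coloring (sierp_verts C4_verts n) (sierp_adj C4_adj n) 3 cE"
      using upper[of n] n by simp
    then show "\<exists>c. inj_edge_coloring (sierp_verts C4_verts n) (sierp_adj C4_adj n) 3 c"
      by blast
    show "\<And>y. \<exists>c. inj_edge_coloring (sierp_verts C4_verts n) (sierp_adj C4_adj n) y c \<Longrightarrow> 3 \<le> y"
      using lower2 n by blast
  qed
qed

end
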